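(* Let $e:S\to A$ and $f:A\to X$ be morphisms in a weakly unital category $\mathbb{C}$. If $fe$ has trivial centralizer, then so does $f$. In particular (taking $A=X$, $f=1_X$), if $e:S\to X$ has trivial centralizer, then $X$ has trivial center.
   Context: A pointed category $\mathbb{C}$ with finite products is weakly unital if for all objects $A,B$ the morphisms $\langle 1,0\rangle:A\to A\times B$ and $\langle 0,1\rangle:B\to A\times B$ are jointly epimorphic. Morphisms $f:A\to X$ and $g:B\to X$ commute if there exists $\varphi:A\times B\to X$ with $\varphi\langle1,0\rangle=f$ and $\varphi\langle0,1\rangle=g$. The centralizer $z_f:Z_X(A,f)\to X$ of $f$ is the terminal object in the category of morphisms $g:B\to X$ commuting with $f$ (morphisms being maps over $X$); $f$ has trivial centralizer if $Z_X(A,f)=0$. The center of $X$ is the centralizer of $1_X$; $X$ has trivial center if it is $0$. *)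

theory Defs
  imports Main
begin

text \<open>A category is given by a type of objects 'o and a type of morphisms 'm
(every element of 'm is a morphism), with domain, codomain, composition
(Comp C g f = g after f, meaningful when Cod C f = Dom C g) and identities.\<close>

record ('o, 'm) cat =
  Dom  :: "'m \<Rightarrow> 'o"
  Cod  :: "'m \<Rightarrow> 'o"
  Comp :: "'m \<Rightarrow> 'm \<Rightarrow> 'm"
  Idm  :: "'o \<Rightarrow> 'm"

definition hom :: "('o, 'm) cat \<Rightarrow> 'o \<Rightarrow> 'o \<Rightarrow> 'm set" where
  "hom C A B = {f. Dom C f = A \<and> Cod C f = B}"

definition is_category :: "('o, 'm) cat \<Rightarrow> bool" where
  "is_category C \<longleftrightarrow>
     (\<forall>a. Dom C (Idm C a) = a \<and> Cod C (Idm C a) = a) \<and>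
     (\<forall>f g. Cod C f = Dom C g \<longrightarrow>
        Dom C (Comp C g f) = Dom C f \<and> Cod C (Comp C g f) = Cod C g) \<and>
     (\<forall>f. Comp C f (Idm C (Dom C f)) = f \<and> Comp C (Idm C (Cod C f)) f = f) \<and>
     (\<forall>f g h. Cod C f = Dom C g \<longrightarrow> Cod C g = Dom C h \<longrightarrow>
        Comp C h (Comp C g f) = Comp C (Comp C h g) f)"

definition is_zero_object :: "('o, 'm) cat \<Rightarrow> 'o \<Rightarrow> bool" where
  "is_zero_object C Z \<longleftrightarrow>
     (\<forall>A. \<exists>!f. f \<in> hom C A Z) \<and> (\<forall>A. \<exists>!f. f \<in> hom C Z A)"

definition is_pointed :: "('o, 'm) cat \<Rightarrow> bool" where
  "is_pointed C \<longleftrightarrow> (\<exists>Z. is_zero_object C Z)"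

definition zero_mor :: "('o, 'm) cat \<Rightarrow> 'o \<Rightarrow> 'o \<Rightarrow> 'm" where
  "zero_mor C A B =
     (let Z = (SOME Z. is_zero_object C Z)
      in Comp C (THE g. g \<in> hom C Z B) (THE f. f \<in> hom C A Z))"

definition is_product :: "('o, 'm) cat \<Rightarrow> 'o \<Rightarrow> 'o \<Rightarrow> 'o \<Rightarrow> 'm \<Rightarrow> 'm \<Rightarrow> bool" where
  "is_product C A B P p1 p2 \<longleftrightarrow>
     p1 \<in> hom C P A \<and> p2 \<in> hom C P B \<and>
     (\<forall>D f g. f \<in> hom C D A \<longrightarrow> g \<in> hom C D B \<longrightarrow>
        (\<exists>!h. h \<in> hom C D P \<and> Comp C p1 h = f \<and> Comp C p2 h = g))"

text \<open>Finite products: binary products plus a terminal object (the latter is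
provided by the zero object in a pointed category).\<close>
definition has_binary_products :: "('o, 'm) cat \<Rightarrow> bool" where
  "has_binary_products C \<longleftrightarrow> (\<forall>A B. \<exists>P p1 p2. is_product C A B P p1 p2)"

definition pairing :: "('o, 'm) cat \<Rightarrow> 'm \<Rightarrow> 'm \<Rightarrow> 'o \<Rightarrow> 'm \<Rightarrow> 'm \<Rightarrow> 'm" where
  "pairing C p1 p2 D f g = (THE h. h \<in> hom C D (Dom C p1) \<and> Comp C p1 h = f \<and> Comp C p2 h = g)"

definition jointly_epic :: "('o, 'm) cat \<Rightarrow> 'm \<Rightarrow> 'm \<Rightarrow> bool" where
  "jointly_epic C u v \<longleftrightarrow>
     (\<forall>s t. Dom C s = Cod C u \<longrightarrow> Dom C t = Cod C u \<longrightarrow> Cod C s = Cod C t \<longrightarrow>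
        Comp C s u = Comp C t u \<longrightarrow> Comp C s v = Comp C t v \<longrightarrow> s = t)"

definition weakly_unital :: "('o, 'm) cat \<Rightarrow> bool" where
  "weakly_unital C \<longleftrightarrow>
     is_category C \<and> is_pointed C \<and> has_binary_products C \<and>
     (\<forall>A B P p1 p2. is_product C A B P p1 p2 \<longrightarrow>
        jointly_epic C (pairing C p1 p2 A (Idm C A) (zero_mor C A B))
                       (pairing C p1 p2 B (zero_mor C B A) (Idm C B)))"

definition commute :: "('o, 'm) cat \<Rightarrow> 'm \<Rightarrow> 'm \<Rightarrow> bool" where
  "commute C f g \<longleftrightarrow> Cod C f = Cod C g \<and>
     (\<exists>P p1 p2 \<phi>. is_product C (Dom C f) (Dom C g) P p1 p2 \<and>
        \<phi> \<in> hom C P (Cod C f) \<and>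
        Comp C \<phi> (pairing C p1 p2 (Dom C f) (Idm C (Dom C f)) (zero_mor C (Dom C f) (Dom C g))) = f \<and>
        Comp C \<phi> (pairing C p1 p2 (Dom C g) (zero_mor C (Dom C g) (Dom C f)) (Idm C (Dom C g))) = g)"

definition is_centralizer :: "('o, 'm) cat \<Rightarrow> 'm \<Rightarrow> 'm \<Rightarrow> bool" where
  "is_centralizer C f z \<longleftrightarrow> Cod C z = Cod C f \<and> commute C f z \<and>
     (\<forall>g. Cod C g = Cod C f \<longrightarrow> commute C f g \<longrightarrow>
        (\<exists>!h. h \<in> hom C (Dom C g) (Dom C z) \<and> Comp C z h = g))"

definition has_trivial_centralizer :: "('o, 'm) cat \<Rightarrow> 'm \<Rightarrow> bool" where
  "has_trivial_centralizer C f \<longleftrightarrow>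
     (\<exists>z. is_centralizer C f z \<and> is_zero_object C (Dom C z))"

definition has_trivial_center :: "('o, 'm) cat \<Rightarrow> 'o \<Rightarrow> bool" where
  "has_trivial_center C X \<longleftrightarrow> has_trivial_centralizer C (Idm C X)"

end

theory Submission
  imports Defs
begin

lemma hom_iff: "f \<in> hom C A B \<longleftrightarrow> Dom C f = A \<and> Cod C f = B"
  by (simp add: hom_def)

lemma comp_hom: "is_category C \<Longrightarrow> f \<in> hom C A B \<Longrightarrow> g \<in> hom C B D \<Longrightarrow> Comp C g f \<in> hom C A D"
  unfolding is_category_def hom_def by auto

lemma assoc: "is_category C \<Longrightarrow> f \<in> hom C A B \<Longrightarrow> g \<in> hom C B D \<Longrightarrow> h \<in> hom C D E \<Longrightarrow>
   Comp C h (Comp C g f) = Comp C (Comp C h g) f"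
  unfolding is_category_def hom_def by auto

lemma idl: "is_category C \<Longrightarrow> f \<in> hom C A B \<Longrightarrow> Comp C (Idm C B) f = f"
  unfolding is_category_def hom_def by auto

lemma idr: "is_category C \<Longrightarrow> f \<in> hom C A B \<Longrightarrow> Comp C f (Idm C A) = f"
  unfolding is_category_def hom_def by auto

lemma id_hom: "is_category C \<Longrightarrow> Idm C A \<in> hom C A A"
  unfolding is_category_def hom_def by auto

lemma zto: "is_zero_object C Z \<Longrightarrow> \<exists>!f. f \<in> hom C A Z"
  unfolding is_zero_object_def by (elim conjE) (erule spec)

lemma zfrom: "is_zero_object C Z \<Longrightarrow> \<exists>!f. f \<in> hom C Z A"
  unfolding is_zero_object_def by (elim conjE) (erule spec)

lemma zero_to: "is_zero_object C Z \<Longrightarrow> f \<in> hom C A Z \<Longrightarrow> g \<in> hom C A Z \<Longrightarrow> f = g"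
  by (drule zto[where A=A]) (erule ex1E, blast)

lemma zero_from: "is_zero_object C Z \<Longrightarrow> f \<in> hom C Z A \<Longrightarrow> g \<in> hom C Z A \<Longrightarrow> f = g"
  by (drule zfrom[where A=A]) (erule ex1E, blast)

lemma Z0: "is_pointed C \<Longrightarrow> is_zero_object C (SOME Z. is_zero_object C Z)"
  unfolding is_pointed_def by (rule someI_ex)

lemma to_Z0: "is_pointed C \<Longrightarrow> (THE f. f \<in> hom C A (SOME Z. is_zero_object C Z)) \<in> hom C A (SOME Z. is_zero_object C Z)"
  by (drule Z0, drule zto[where A=A], erule theI')

lemma from_Z0: "is_pointed C \<Longrightarrow> (THE f. f \<in> hom C (SOME Z. is_zero_object C Z) A) \<in> hom C (SOME Z. is_zero_object C Z) A"
  by (drule Z0, drule zfrom[where A=A], erule theI')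

lemma zero_hom: "is_category C \<Longrightarrow> is_pointed C \<Longrightarrow> zero_mor C A B \<in> hom C A B"
  unfolding zero_mor_def Let_def by (rule comp_hom, assumption, erule to_Z0, erule from_Z0)

lemma zero_comp_right: assumes "is_category C" "is_pointed C" "e \<in> hom C S A"
  shows "Comp C (zero_mor C A B) e = zero_mor C S B"
proof -
  let ?Z = "SOME Z. is_zero_object C Z"
  have t: "(THE f. f \<in> hom C A ?Z) \<in> hom C A ?Z" using to_Z0 assms by metis
  have u: "(THE f. f \<in> hom C ?Z B) \<in> hom C ?Z B" using from_Z0 assms by metis
  have t2: "(THE f. f \<in> hom C S ?Z) \<in> hom C S ?Z" using to_Z0 assms by metis
  have "Comp C (THE f. f \<in> hom C A ?Z) e = (THE f. f \<in> hom C S ?Z)"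
    using zero_to[OF Z0[OF assms(2)] comp_hom[OF assms(1) assms(3) t] t2] .
  then show ?thesis unfolding zero_mor_def Let_def
    using assoc[OF assms(1) assms(3) t u] by simp
qed

lemma zero_comp_left: assumes "is_category C" "is_pointed C" "e \<in> hom C B D"
  shows "Comp C e (zero_mor C A B) = zero_mor C A D"
proof -
  let ?Z = "SOME Z. is_zero_object C Z"
  have t: "(THE f. f \<in> hom C A ?Z) \<in> hom C A ?Z" using to_Z0 assms by metis
  have u: "(THE f. f \<in> hom C ?Z B) \<in> hom C ?Z B" using from_Z0 assms by metis
  have u2: "(THE f. f \<in> hom C ?Z D) \<in> hom C ?Z D" using from_Z0 assms by metis
  have "Comp C e (THE f. f \<in> hom C ?Z B) = (THE f. f \<in> hom C ?Z D)"
    using zero_from[OF Z0[OF assms(2)] comp_hom[OF assms(1) u assms(3)] u2] .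
  then show ?thesis unfolding zero_mor_def Let_def
    using assoc[OF assms(1) t u assms(3)] by simp
qed

lemma prod_univ: "is_product C A B P p1 p2 \<Longrightarrow> (\<forall>D f g. f \<in> hom C D A \<longrightarrow> g \<in> hom C D B \<longrightarrow>
        (\<exists>!h. h \<in> hom C D P \<and> Comp C p1 h = f \<and> Comp C p2 h = g))"
  unfolding is_product_def by (elim conjE)

lemma pairing_prop: assumes "is_product C A B P p1 p2" "f \<in> hom C D A" "g \<in> hom C D B"
  shows "pairing C p1 p2 D f g \<in> hom C D P \<and> Comp C p1 (pairing C p1 p2 D f g) = f
     \<and> Comp C p2 (pairing C p1 p2 D f g) = g"
proof -
  have "Dom C p1 = P" using assms(1) unfolding is_product_def hom_def by auto
  moreover have "\<exists>!h. h \<in> hom C D P \<and> Comp C p1 h = f \<and> Comp C p2 h = g"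
    using prod_univ[OF assms(1), rule_format, OF assms(2) assms(3)] .
  then have "(THE h. h \<in> hom C D P \<and> Comp C p1 h = f \<and> Comp C p2 h = g) \<in> hom C D P
     \<and> Comp C p1 (THE h. h \<in> hom C D P \<and> Comp C p1 h = f \<and> Comp C p2 h = g) = f
     \<and> Comp C p2 (THE h. h \<in> hom C D P \<and> Comp C p1 h = f \<and> Comp C p2 h = g) = g"
    by (rule theI')
  with \<open>Dom C p1 = P\<close> show ?thesis unfolding pairing_def by simp
qed

lemma pairing_unique: assumes "is_product C A B P p1 p2" "f \<in> hom C D A" "g \<in> hom C D B"
  "h \<in> hom C D P" "Comp C p1 h = f" "Comp C p2 h = g"
  shows "pairing C p1 p2 D f g = h"
proof -
  have "Dom C p1 = P" using assms(1) unfolding is_product_def hom_def by auto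
  moreover have "\<exists>!h. h \<in> hom C D P \<and> Comp C p1 h = f \<and> Comp C p2 h = g"
    using prod_univ[OF assms(1), rule_format, OF assms(2) assms(3)] .
  then have "(THE h. h \<in> hom C D P \<and> Comp C p1 h = f \<and> Comp C p2 h = g) = h"
    by (rule the1_equality) (use assms(4-6) in simp)
  with \<open>Dom C p1 = P\<close> show ?thesis unfolding pairing_def by simp
qed

lemma prod_proj: "is_product C A B P p1 p2 \<Longrightarrow> p1 \<in> hom C P A \<and> p2 \<in> hom C P B"
  unfolding is_product_def by blast

lemma commute_comp:
  assumes cat: "is_category C" and pt: "is_pointed C" and bp: "has_binary_products C"
    and e: "e \<in> hom C S A" and f: "f \<in> hom C A X" and cfg: "commute C f g"
  shows "commute C (Comp C f e) g"
proof -
  let ?B = "Dom C g"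
  have fe: "Comp C f e \<in> hom C S X" using comp_hom[OF cat e f] .
  from cfg obtain P p1 p2 \<phi> where P: "is_product C A ?B P p1 p2" and phi: "\<phi> \<in> hom C P X"
    and e1: "Comp C \<phi> (pairing C p1 p2 A (Idm C A) (zero_mor C A ?B)) = f"
    and e2: "Comp C \<phi> (pairing C p1 p2 ?B (zero_mor C ?B A) (Idm C ?B)) = g"
    and cg: "Cod C g = X"
    using f unfolding commute_def hom_def by auto
  have g: "g \<in> hom C ?B X" using cg by (simp add: hom_def)
  obtain Q q1 q2 where Q: "is_product C S ?B Q q1 q2" using bp unfolding has_binary_products_def by blast
  note pp = prod_proj[OF P] note qq = prod_proj[OF Q]
  have eq1: "Comp C e q1 \<in> hom C Q A" using comp_hom[OF cat _ e] qq by blast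
  define m where "m = pairing C p1 p2 Q (Comp C e q1) q2"
  have m: "m \<in> hom C Q P" "Comp C p1 m = Comp C e q1" "Comp C p2 m = q2"
    using pairing_prop[OF P eq1] qq unfolding m_def by auto
  have zSB: "zero_mor C S ?B \<in> hom C S ?B" using zero_hom cat pt by metis
  have zBS: "zero_mor C ?B S \<in> hom C ?B S" using zero_hom cat pt by metis
  have zAB: "zero_mor C A ?B \<in> hom C A ?B" using zero_hom cat pt by metis
  have zBA: "zero_mor C ?B A \<in> hom C ?B A" using zero_hom cat pt by metis
  have idS: "Idm C S \<in> hom C S S" using id_hom cat by metis
  have idA: "Idm C A \<in> hom C A A" using id_hom cat by metis
  have idB: "Idm C ?B \<in> hom C ?B ?B" using id_hom cat by metis
  define i1 where "i1 = pairing C q1 q2 S (Idm C S) (zero_mor C S ?B)"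
  have i1: "i1 \<in> hom C S Q" "Comp C q1 i1 = Idm C S" "Comp C q2 i1 = zero_mor C S ?B"
    using pairing_prop[OF Q idS zSB] unfolding i1_def by auto
  define i2 where "i2 = pairing C q1 q2 ?B (zero_mor C ?B S) (Idm C ?B)"
  have i2: "i2 \<in> hom C ?B Q" "Comp C q1 i2 = zero_mor C ?B S" "Comp C q2 i2 = Idm C ?B"
    using pairing_prop[OF Q zBS idB] unfolding i2_def by auto
  define j1 where "j1 = pairing C p1 p2 A (Idm C A) (zero_mor C A ?B)"
  have j1: "j1 \<in> hom C A P" "Comp C p1 j1 = Idm C A" "Comp C p2 j1 = zero_mor C A ?B"
    using pairing_prop[OF P idA zAB] unfolding j1_def by auto
  define j2 where "j2 = pairing C p1 p2 ?B (zero_mor C ?B A) (Idm C ?B)"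
  have j2: "j2 \<in> hom C ?B P" "Comp C p1 j2 = zero_mor C ?B A" "Comp C p2 j2 = Idm C ?B"
    using pairing_prop[OF P zBA idB] unfolding j2_def by auto
  have ezSB: "Comp C (zero_mor C A ?B) e = zero_mor C S ?B" using zero_comp_right[OF cat pt e] .
  have ezBA: "Comp C e (zero_mor C ?B S) = zero_mor C ?B A" using zero_comp_left[OF cat pt e] .
  have mi1: "Comp C m i1 \<in> hom C S P" using comp_hom[OF cat i1(1) m(1)] .
  have j1e: "Comp C j1 e \<in> hom C S P" using comp_hom[OF cat e j1(1)] .
  have a1: "Comp C p1 (Comp C m i1) = e"
    using assoc[OF cat i1(1) m(1) pp[THEN conjunct1]] m(2) assoc[OF cat i1(1) qq[THEN conjunct1] e] i1(2) idr[OF cat e] by simp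
  have a2: "Comp C p2 (Comp C m i1) = zero_mor C S ?B"
    using assoc[OF cat i1(1) m(1) pp[THEN conjunct2]] m(3) i1(3) by simp
  have b1: "Comp C p1 (Comp C j1 e) = e"
    using assoc[OF cat e j1(1) pp[THEN conjunct1]] j1(2) idl[OF cat e] by simp
  have b2: "Comp C p2 (Comp C j1 e) = zero_mor C S ?B"
    using assoc[OF cat e j1(1) pp[THEN conjunct2]] j1(3) ezSB by simp
  have mij: "Comp C m i1 = Comp C j1 e"
    using pairing_unique[OF P e zSB mi1 a1 a2] pairing_unique[OF P e zSB j1e b1 b2] by simp
  have mi2: "Comp C m i2 \<in> hom C ?B P" using comp_hom[OF cat i2(1) m(1)] .
  have c1: "Comp C p1 (Comp C m i2) = zero_mor C ?B A"
    using assoc[OF cat i2(1) m(1) pp[THEN conjunct1]] m(2) assoc[OF cat i2(1) qq[THEN conjunct1] e] i2(2) ezBA by simp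
  have c2: "Comp C p2 (Comp C m i2) = Idm C ?B"
    using assoc[OF cat i2(1) m(1) pp[THEN conjunct2]] m(3) i2(3) by simp
  have mij2: "Comp C m i2 = j2"
    using pairing_unique[OF P zBA idB mi2 c1 c2] j2_def by simp
  define \<psi> where "\<psi> = Comp C \<phi> m"
  have psi: "\<psi> \<in> hom C Q X" using comp_hom[OF cat m(1) phi] unfolding \<psi>_def .
  have r1: "Comp C \<psi> i1 = Comp C f e"
    unfolding \<psi>_def using assoc[OF cat i1(1) m(1) phi] mij assoc[OF cat e j1(1) phi] e1 j1_def by simp
  have r2: "Comp C \<psi> i2 = g"
    unfolding \<psi>_def using assoc[OF cat i2(1) m(1) phi] mij2 e2 j2_def by simp
  have dfe: "Dom C (Comp C f e) = S" "Cod C (Comp C f e) = X" using fe by (auto simp: hom_def)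
  show ?thesis unfolding commute_def dfe
    apply (rule conjI) using cg apply simp
    apply (rule exI[of _ Q], rule exI[of _ q1], rule exI[of _ q2], rule exI[of _ \<psi>])
    using Q psi r1 r2 unfolding i1_def i2_def by simp
qed

theorem proposition3p2:
  fixes C :: "('o, 'm) cat"
  assumes "weakly_unital C"
  shows "(\<forall>e f. Cod C e = Dom C f \<longrightarrow>
            has_trivial_centralizer C (Comp C f e) \<longrightarrow> has_trivial_centralizer C f)
       \<and> (\<forall>e. has_trivial_centralizer C e \<longrightarrow> has_trivial_center C (Cod C e))"
proof -
  have cat: "is_category C" and pt: "is_pointed C" and bp: "has_binary_products C"
    using assms unfolding weakly_unital_def by auto
  have P1: "has_trivial_centralizer C f" if ef: "Cod C e = Dom C f"
    and tc: "has_trivial_centralizer C (Comp C f e)" for e f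
  proof -
    let ?S = "Dom C e" let ?A = "Cod C e" let ?X = "Cod C f"
    have e: "e \<in> hom C ?S ?A" by (simp add: hom_def)
    have f: "f \<in> hom C ?A ?X" using ef by (simp add: hom_def)
    have fe: "Comp C f e \<in> hom C ?S ?X" using comp_hom[OF cat e f] .
    from tc obtain z where zc: "is_centralizer C (Comp C f e) z" and zz: "is_zero_object C (Dom C z)"
      unfolding has_trivial_centralizer_def by blast
    let ?Z = "Dom C z"
    have cz: "Cod C z = ?X" using zc fe unfolding is_centralizer_def hom_def by auto
    have z: "z \<in> hom C ?Z ?X" using cz by (simp add: hom_def)
    have comm: "commute C f z"
    proof -
      obtain P p1 p2 where P: "is_product C ?A ?Z P p1 p2" using bp unfolding has_binary_products_def by blast
      note pp = prod_proj[OF P]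
      have idA: "Idm C ?A \<in> hom C ?A ?A" using id_hom cat by metis
      have idZ: "Idm C ?Z \<in> hom C ?Z ?Z" using id_hom cat by metis
      have zAZ: "zero_mor C ?A ?Z \<in> hom C ?A ?Z" using zero_hom cat pt by metis
      have zZA: "zero_mor C ?Z ?A \<in> hom C ?Z ?A" using zero_hom cat pt by metis
      define j1 where "j1 = pairing C p1 p2 ?A (Idm C ?A) (zero_mor C ?A ?Z)"
      have j1: "j1 \<in> hom C ?A P" "Comp C p1 j1 = Idm C ?A"
        using pairing_prop[OF P idA zAZ] unfolding j1_def by auto
      define j2 where "j2 = pairing C p1 p2 ?Z (zero_mor C ?Z ?A) (Idm C ?Z)"
      have j2: "j2 \<in> hom C ?Z P" "Comp C p1 j2 = zero_mor C ?Z ?A"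
        using pairing_prop[OF P zZA idZ] unfolding j2_def by auto
      have phi: "Comp C f p1 \<in> hom C P ?X" using comp_hom[OF cat _ f] pp by blast
      have r1: "Comp C (Comp C f p1) j1 = f"
        using assoc[OF cat j1(1) pp[THEN conjunct1] f] j1(2) idr[OF cat f] by simp
      have h2: "Comp C (Comp C f p1) j2 \<in> hom C ?Z ?X" using comp_hom[OF cat j2(1) phi] .
      have r2: "Comp C (Comp C f p1) j2 = z" using zero_from[OF zz h2 z] .
      have df: "Dom C f = ?A" using ef by simp
      show ?thesis unfolding commute_def df
        apply (rule conjI) using cz apply simp
        apply (rule exI[of _ P], rule exI[of _ p1], rule exI[of _ p2], rule exI[of _ "Comp C f p1"])
        using P phi r1 r2 unfolding j1_def j2_def by simp
    qed
    have univ: "\<exists>!h. h \<in> hom C (Dom C g) ?Z \<and> Comp C z h = g"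
      if cg: "Cod C g = Cod C f" and cfg: "commute C f g" for g
    proof -
      have "commute C (Comp C f e) g" using commute_comp[OF cat pt bp e f cfg] .
      moreover have "Cod C g = Cod C (Comp C f e)" using cg fe by (simp add: hom_def)
      ultimately have ex: "\<exists>!h. h \<in> hom C (Dom C g) ?Z \<and> Comp C z h = g"
        using zc unfolding is_centralizer_def by blast
      then show ?thesis .
    qed
    have "is_centralizer C f z" unfolding is_centralizer_def using cz comm univ by blast
    then show ?thesis unfolding has_trivial_centralizer_def using zz by blast
  qed
  have P2: "has_trivial_center C (Cod C e)" if "has_trivial_centralizer C e" for e
  proof -
    have "Comp C (Idm C (Cod C e)) e = e" using cat unfolding is_category_def by blast
    moreover have "Cod C e = Dom C (Idm C (Cod C e))" using cat unfolding is_category_def by simp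
    ultimately show ?thesis unfolding has_trivial_center_def using P1 that by metis
  qed
  show ?thesis using P1 P2 by blast
qed

end
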